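(* Let $L>0$ and $V\in C^0([0,L];\mathbb{R})$, and assume there is $\mathbf{x}_0\in(0,L)$ such that $V$ is strictly decreasing on $[0,\mathbf{x}_0]$ and strictly increasing on $[\mathbf{x}_0,L]$. Then the functions $x_\pm:[E_0,\infty)\to[0,L]$ are uniformly continuous, the function $\mathbb{R}\times[0,L]\to\mathbb{R}$, $(E,x)\mapsto d_{A,E}(x)$ is uniformly continuous, and there is $C>0$ such that for every $E\in\mathbb{R}$ the map $x\mapsto d_{A,E}(x)$ is $C$-Lipschitz.
   Context: $E_0=\min_{[0,L]}V=V(\mathbf{x}_0)$. For $E\ge E_0$: $x_-(E)$ is the solution of $V(x_-(E))=E$ with $x_-(E)\le\mathbf{x}_0$ if $E\le V(0)$, and $x_-(E)=0$ if $E\ge V(0)$; $x_+(E)$ is the solution of $V(x_+(E))=E$ with $x_+(E)\ge\mathbf{x}_0$ if $E\le V(L)$, and $x_+(E)=L$ if $E\ge V(L)$. For $E\ge E_0$, $K_E=\{V\le E\}$ and $d_{A,E}(x)=\inf_{y\in K_E}\left|\int_y^x\sqrt{(V(s)-E)_+}ds\right|$; for $E<E_0$, $d_{A,E}:=d_{A,E_0}$. *)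

theory Defs
  imports "HOL-Analysis.Analysis"
begin

definition E0 :: "(real \<Rightarrow> real) \<Rightarrow> real \<Rightarrow> real" where
  "E0 V L = Inf (V ` {0..L})"

definition x_minus :: "(real \<Rightarrow> real) \<Rightarrow> real \<Rightarrow> real \<Rightarrow> real" where
  "x_minus V x0 E = (if V 0 \<le> E then 0 else (THE x. 0 \<le> x \<and> x \<le> x0 \<and> V x = E))"

definition x_plus :: "(real \<Rightarrow> real) \<Rightarrow> real \<Rightarrow> real \<Rightarrow> real \<Rightarrow> real" where
  "x_plus V L x0 E = (if V L \<le> E then L else (THE x. x0 \<le> x \<and> x \<le> L \<and> V x = E))"

definition oint :: "(real \<Rightarrow> real) \<Rightarrow> real \<Rightarrow> real \<Rightarrow> real" where
  "oint f y x = (if y \<le> x then integral {y..x} f else - integral {x..y} f)"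

definition K_set :: "(real \<Rightarrow> real) \<Rightarrow> real \<Rightarrow> real \<Rightarrow> real set" where
  "K_set V L E = {x \<in> {0..L}. V x \<le> E}"

definition d_A :: "(real \<Rightarrow> real) \<Rightarrow> real \<Rightarrow> real \<Rightarrow> real \<Rightarrow> real" where
  "d_A V L E x = (let E' = max E (E0 V L) in
     Inf ((\<lambda>y. \<bar>oint (\<lambda>s. sqrt (max (V s - E') 0)) y x\<bar>) ` K_set V L E'))"

end

theory Submission
  imports Defs "HOL-Analysis.Analysis"
begin

lemma oint_eq:
  assumes f: "continuous_on {0..L} f" and a: "a \<in> {0..L}" and b: "b \<in> {0..L}"
  shows "oint f a b = integral {0..b} f - integral {0..a} f"
proof (cases "a \<le> b")
  case True
  have "integral {0..a} f + integral {a..b} f = integral {0..b} f"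
    apply (rule Henstock_Kurzweil_Integration.integral_combine) using True a b
      apply auto
    apply (rule integrable_continuous_interval)
    apply (rule continuous_on_subset[OF f]) using b by auto
  then show ?thesis using True unfolding oint_def by simp
next
  case False
  have "integral {0..b} f + integral {b..a} f = integral {0..a} f"
    apply (rule Henstock_Kurzweil_Integration.integral_combine) using False a b
      apply auto
    apply (rule integrable_continuous_interval)
    apply (rule continuous_on_subset[OF f]) using a by auto
  then show ?thesis using False unfolding oint_def by simp
qed

lemma int_bound_aux:
  fixes g :: "real \<Rightarrow> real"
  assumes g: "continuous_on {0..L} g" and K: "\<And>s. s \<in> {0..L} \<Longrightarrow> \<bar>g s\<bar> \<le> K"
    and a: "a \<in> {0..L}" and b: "b \<in> {0..L}" and ab: "a \<le> b"
  shows "\<bar>integral {0..b} g - integral {0..a} g\<bar> \<le> K * \<bar>b - a\<bar>"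
proof -
  have int: "g integrable_on {a..b}"
    apply (rule integrable_continuous_interval)
    apply (rule continuous_on_subset[OF g]) using a b by auto
  have "integral {0..a} g + integral {a..b} g = integral {0..b} g"
    apply (rule Henstock_Kurzweil_Integration.integral_combine) using ab a b
      apply auto
    apply (rule integrable_continuous_interval)
    apply (rule continuous_on_subset[OF g]) using b by auto
  hence e: "integral {0..b} g - integral {0..a} g = integral {a..b} g" by simp
  have "integral {a..b} g \<le> integral {a..b} (\<lambda>_. K)"
  proof (rule integral_le[OF int])
    fix x assume "x \<in> {a..b}" thus "g x \<le> K" using K[of x] a b by auto
  qed auto
  moreover have "integral {a..b} (\<lambda>_. -K) \<le> integral {a..b} g"
  proof (rule integral_le[OF _ int])
    fix x assume "x \<in> {a..b}" thus "-K \<le> g x" using K[of x] a b by auto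
  qed auto
  ultimately show ?thesis unfolding e using ab by (auto simp: abs_le_iff algebra_simps)
qed

lemma int_bound:
  fixes g :: "real \<Rightarrow> real"
  assumes g: "continuous_on {0..L} g" and K: "\<And>s. s \<in> {0..L} \<Longrightarrow> \<bar>g s\<bar> \<le> K"
    and a: "a \<in> {0..L}" and b: "b \<in> {0..L}"
  shows "\<bar>integral {0..b} g - integral {0..a} g\<bar> \<le> K * \<bar>b - a\<bar>"
proof (cases "a \<le> b")
  case True thus ?thesis using int_bound_aux[OF g K a b] by auto
next
  case False thus ?thesis using int_bound_aux[OF g K b a] by (auto simp: abs_minus_commute)
qed

lemma sqrt_diff_bound:
  fixes v c1 c2 :: real
  shows "\<bar>sqrt (max (v - c1) 0) - sqrt (max (v - c2) 0)\<bar> \<le> sqrt \<bar>c1 - c2\<bar>"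
proof -
  have gen: "sqrt p - sqrt q \<le> sqrt \<bar>c1 - c2\<bar>" if "0 \<le> q" "q \<le> p" "p - q \<le> \<bar>c1 - c2\<bar>" for p q :: real
  proof -
    have "sqrt p = sqrt (q + (p - q))" by simp
    also have "\<dots> \<le> sqrt q + sqrt (p - q)" by (rule sqrt_add_le_add_sqrt) (use that in auto)
    also have "sqrt (p - q) \<le> sqrt \<bar>c1 - c2\<bar>" using that by simp
    finally show ?thesis by simp
  qed
  let ?p = "max (v - c1) 0" and ?q = "max (v - c2) 0"
  show ?thesis
  proof (cases "?q \<le> ?p")
    case True
    have "sqrt ?q \<le> sqrt ?p" using True real_sqrt_le_mono by blast
    thus ?thesis using gen[of ?q ?p] True by (auto simp: abs_le_iff)
  next
    case False
    have "sqrt ?p \<le> sqrt ?q" using False real_sqrt_le_mono by (metis linorder_le_cases)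
    thus ?thesis using gen[of ?p ?q] False by (auto simp: abs_le_iff)
  qed
qed

lemma inf_compare:
  fixes g h :: "real \<Rightarrow> real"
  assumes S: "S \<noteq> {}" and T: "T \<noteq> {}" and g0: "\<And>y. y \<in> S \<Longrightarrow> 0 \<le> g y"
    and h0: "\<And>y. y \<in> T \<Longrightarrow> 0 \<le> h y"
    and ex: "\<And>y. y \<in> T \<Longrightarrow> \<exists>y'\<in>S. g y' \<le> h y + e"
  shows "Inf (g ` S) \<le> Inf (h ` T) + e"
proof -
  have bS: "bdd_below (g ` S)" using g0 by (intro bdd_belowI[of _ 0]) auto
  have "Inf (g ` S) - e \<le> Inf (h ` T)"
  proof (rule cInf_greatest)
    show "h ` T \<noteq> {}" using T by simp
    fix z assume "z \<in> h ` T"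
    then obtain y where y: "y \<in> T" "z = h y" by auto
    obtain y' where "y' \<in> S" "g y' \<le> h y + e" using ex[OF y(1)] by auto
    moreover have "Inf (g ` S) \<le> g y'" using cInf_lower[OF _ bS] \<open>y' \<in> S\<close> by auto
    ultimately show "Inf (g ` S) - e \<le> z" using y by simp
  qed
  thus ?thesis by simp
qed


lemma uc_inv:
  fixes V \<phi> :: "real \<Rightarrow> real"
  assumes S: "compact S" and cV: "continuous_on S V" and inj: "inj_on V S"
    and phi: "\<And>E. E \<in> A \<Longrightarrow> \<phi> E \<in> S \<and> V (\<phi> E) = min E c"
  shows "uniformly_continuous_on A \<phi>"
proof -
  define g where "g = the_inv_into S V"
  have gV: "\<forall>x\<in>S. g (V x) = x" using inj unfolding g_def by (simp add: the_inv_into_f_f)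
  have "continuous_on (V ` S) g" by (rule continuous_on_inv[OF cV S gV])
  hence uc: "uniformly_continuous_on (V ` S) g"
    by (intro compact_uniformly_continuous compact_continuous_image S cV)
  show ?thesis unfolding uniformly_continuous_on_def
  proof (intro allI impI)
    fix e :: real assume "e > 0"
    then obtain d where d: "d > 0" "\<forall>x\<in>V ` S. \<forall>x'\<in>V ` S. dist x' x < d \<longrightarrow> dist (g x') (g x) < e"
      using uc unfolding uniformly_continuous_on_def by metis
    show "\<exists>d>0. \<forall>x\<in>A. \<forall>x'\<in>A. dist x' x < d \<longrightarrow> dist (\<phi> x') (\<phi> x) < e"
    proof (intro exI[of _ d] conjI ballI impI)
      fix x x' assume x: "x \<in> A" and x': "x' \<in> A" and dx: "dist x' x < d"
      have m: "dist (min x' c) (min x c) \<le> dist x' x" by (auto simp: dist_real_def)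
      have "dist (g (V (\<phi> x'))) (g (V (\<phi> x))) < e"
      proof -
        have "V (\<phi> x') \<in> V ` S" "V (\<phi> x) \<in> V ` S" using phi[OF x] phi[OF x'] by blast+
        moreover have "dist (V (\<phi> x')) (V (\<phi> x)) < d" using phi[OF x] phi[OF x'] m dx by simp
        ultimately show ?thesis using d(2) by blast
      qed
      thus "dist (\<phi> x') (\<phi> x) < e" using gV phi[OF x] phi[OF x'] by metis
    qed (use d in auto)
  qed
qed

locale setting =
  fixes V :: "real \<Rightarrow> real" and L x0 :: real
  assumes Lpos: "L > 0"
    and cont: "continuous_on {0..L} V"
    and x0pos: "0 < x0" and x0L: "x0 < L"
    and dec: "\<And>a b. 0 \<le> a \<Longrightarrow> a < b \<Longrightarrow> b \<le> x0 \<Longrightarrow> V b < V a"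
    and inc: "\<And>a b. x0 \<le> a \<Longrightarrow> a < b \<Longrightarrow> b \<le> L \<Longrightarrow> V a < V b"
begin

lemma dec_le: "0 \<le> a \<Longrightarrow> a \<le> b \<Longrightarrow> b \<le> x0 \<Longrightarrow> V b \<le> V a"
  using dec by (cases "a = b") (auto intro: less_imp_le)

lemma inc_le: "x0 \<le> a \<Longrightarrow> a \<le> b \<Longrightarrow> b \<le> L \<Longrightarrow> V a \<le> V b"
  using inc by (cases "a = b") (auto intro: less_imp_le)

lemma Vmin: "x \<in> {0..L} \<Longrightarrow> V x0 \<le> V x"
  using dec_le[of x x0] inc_le[of x0 x] by (cases "x \<le> x0") auto

lemma E0_eq: "E0 V L = V x0"
  unfolding E0_def by (rule cInf_eq_minimum) (use Vmin x0pos x0L in auto)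

lemma inj_left: "inj_on V {0..x0}"
proof (rule inj_onI)
  fix x y assume x: "x \<in> {0..x0}" and y: "y \<in> {0..x0}" and e: "V x = V y"
  show "x = y"
  proof (rule linorder_cases[of x y])
    assume "x < y" thus ?thesis using dec[of x y] dec[of y x] x y e by auto
  next
    assume "y < x" thus ?thesis using dec[of x y] dec[of y x] x y e by auto
  qed
qed

lemma inj_right: "inj_on V {x0..L}"
proof (rule inj_onI)
  fix x y assume x: "x \<in> {x0..L}" and y: "y \<in> {x0..L}" and e: "V x = V y"
  show "x = y"
  proof (rule linorder_cases[of x y])
    assume "x < y" thus ?thesis using inc[of x y] inc[of y x] x y e by auto
  next
    assume "y < x" thus ?thesis using inc[of x y] inc[of y x] x y e by auto
  qed
qed

lemma xm_prop:
  assumes "V x0 \<le> E"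
  shows "x_minus V x0 E \<in> {0..x0} \<and> V (x_minus V x0 E) = min E (V 0)"
proof (cases "V 0 \<le> E")
  case True thus ?thesis using x0pos unfolding x_minus_def by auto
next
  case False
  have c: "continuous_on {0..x0} V" by (rule continuous_on_subset[OF cont]) (use x0L in auto)
  obtain x where x: "0 \<le> x" "x \<le> x0" "V x = E"
    using IVT2'[of V x0 E 0, OF assms _ _ c] False x0pos by (auto simp add: not_le less_imp_le)
  have "(THE x. 0 \<le> x \<and> x \<le> x0 \<and> V x = E) = x"
  proof (rule the_equality)
    show "0 \<le> x \<and> x \<le> x0 \<and> V x = E" using x by simp
    fix y assume "0 \<le> y \<and> y \<le> x0 \<and> V y = E"
    thus "y = x" using inj_onD[OF inj_left, of y x] x by simp
  qed
  thus ?thesis using x False unfolding x_minus_def by auto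
qed

lemma xp_prop:
  assumes "V x0 \<le> E"
  shows "x_plus V L x0 E \<in> {x0..L} \<and> V (x_plus V L x0 E) = min E (V L)"
proof (cases "V L \<le> E")
  case True thus ?thesis using x0L unfolding x_plus_def by auto
next
  case False
  have c: "continuous_on {x0..L} V" by (rule continuous_on_subset[OF cont]) (use x0pos in auto)
  obtain x where x: "x0 \<le> x" "x \<le> L" "V x = E"
    using IVT'[of V x0 E L, OF assms _ _ c] False x0L by (auto simp add: not_le less_imp_le)
  have "(THE x. x0 \<le> x \<and> x \<le> L \<and> V x = E) = x"
  proof (rule the_equality)
    show "x0 \<le> x \<and> x \<le> L \<and> V x = E" using x by simp
    fix y assume "x0 \<le> y \<and> y \<le> L \<and> V y = E"
    thus "y = x" using inj_onD[OF inj_right, of y x] x by simp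
  qed
  thus ?thesis using x False unfolding x_plus_def by auto
qed

lemma uc_xm: "uniformly_continuous_on {V x0..} (x_minus V x0)"
proof (rule uc_inv[OF compact_Icc _ inj_left, where c="V 0"])
  show "continuous_on {0..x0} V" by (rule continuous_on_subset[OF cont]) (use x0L in auto)
qed (use xm_prop in auto)

lemma uc_xp: "uniformly_continuous_on {V x0..} (x_plus V L x0)"
proof (rule uc_inv[OF compact_Icc _ inj_right, where c="V L"])
  show "continuous_on {x0..L} V" by (rule continuous_on_subset[OF cont]) (use x0pos in auto)
qed (use xp_prop in auto)

lemma K_eq:
  assumes E: "V x0 \<le> E"
  shows "K_set V L E = {x_minus V x0 E .. x_plus V L x0 E}"
proof -
  let ?a = "x_minus V x0 E" and ?b = "x_plus V L x0 E"
  have a: "0 \<le> ?a" "?a \<le> x0" "V ?a = min E (V 0)" using xm_prop[OF E] by auto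
  have b: "x0 \<le> ?b" "?b \<le> L" "V ?b = min E (V L)" using xp_prop[OF E] by auto
  have "(0 \<le> x \<and> x \<le> L \<and> V x \<le> E) \<longleftrightarrow> (?a \<le> x \<and> x \<le> ?b)" for x
  proof (cases "x \<le> x0")
    case True
    show ?thesis
    proof
      assume h: "0 \<le> x \<and> x \<le> L \<and> V x \<le> E"
      have "V x \<le> V 0" using dec_le[of 0 x] h True by simp
      hence "V x \<le> V ?a" using a(3) h by simp
      hence "?a \<le> x"
      proof -
        assume v: "V x \<le> V ?a"
        show "?a \<le> x"
        proof (rule ccontr)
          assume "\<not> ?a \<le> x"
          hence "V ?a < V x" using dec[of x ?a] h a(2) by simp
          thus False using v by simp
        qed
      qed
      thus "?a \<le> x \<and> x \<le> ?b" using True b(1) by simp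
    next
      assume h: "?a \<le> x \<and> x \<le> ?b"
      have "V x \<le> V ?a" using dec_le[of ?a x] a(1) h True by simp
      thus "0 \<le> x \<and> x \<le> L \<and> V x \<le> E" using a h b(2) by simp
    qed
  next
    case False
    show ?thesis
    proof
      assume h: "0 \<le> x \<and> x \<le> L \<and> V x \<le> E"
      have "V x \<le> V L" using inc_le[of x L] h False by simp
      hence "V x \<le> V ?b" using b(3) h by simp
      hence "x \<le> ?b"
      proof -
        assume v: "V x \<le> V ?b"
        show "x \<le> ?b"
        proof (rule ccontr)
          assume "\<not> x \<le> ?b"
          hence "V ?b < V x" using inc[of ?b x] h b(1) by simp
          thus False using v by simp
        qed
      qed
      thus "?a \<le> x \<and> x \<le> ?b" using False a(2) by simp
    next
      assume h: "?a \<le> x \<and> x \<le> ?b"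
      have "V x \<le> V ?b" using inc_le[of x ?b] b(2) h False by simp
      thus "0 \<le> x \<and> x \<le> L \<and> V x \<le> E" using b h a(1) False x0pos by simp
    qed
  qed
  hence "\<And>x. x \<in> K_set V L E \<longleftrightarrow> x \<in> {?a..?b}" unfolding K_set_def by simp
  thus ?thesis by blast
qed

end

context setting begin

definition "fc c = (\<lambda>s. sqrt (max (V s - c) 0))"
definition "Fc c x = integral {0..x} (fc c)"
definition "M = Sup (V ` {0..L})"
definition "B = sqrt (M - V x0)"

lemma cont_fc: "continuous_on {0..L} (fc c)"
  unfolding fc_def by (intro continuous_intros cont)

lemma V_le_M: "x \<in> {0..L} \<Longrightarrow> V x \<le> M"
  unfolding M_def
  by (rule cSup_upper) (auto intro!: bounded_imp_bdd_above compact_imp_bounded compact_continuous_image cont)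

lemma B_nonneg: "0 \<le> B"
  unfolding B_def using V_le_M[of x0] x0pos x0L by simp

lemma fc_bound: "V x0 \<le> c \<Longrightarrow> s \<in> {0..L} \<Longrightarrow> \<bar>fc c s\<bar> \<le> B"
  unfolding fc_def B_def using V_le_M[of s] V_le_M[of x0] x0pos x0L by simp

lemma Fc_lip: "V x0 \<le> c \<Longrightarrow> a \<in> {0..L} \<Longrightarrow> b \<in> {0..L} \<Longrightarrow> \<bar>Fc c b - Fc c a\<bar> \<le> B * \<bar>b - a\<bar>"
  unfolding Fc_def by (rule int_bound[OF cont_fc]) (use fc_bound in auto)

lemma Fc_diff:
  assumes a: "a \<in> {0..L}" and b: "b \<in> {0..L}"
  shows "\<bar>(Fc c1 b - Fc c2 b) - (Fc c1 a - Fc c2 a)\<bar> \<le> L * sqrt \<bar>c1 - c2\<bar>"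
proof -
  have i: "fc c integrable_on {0..x}" if "x \<in> {0..L}" for c x
    by (rule integrable_continuous_interval, rule continuous_on_subset[OF cont_fc]) (use that in auto)
  have e: "Fc c1 x - Fc c2 x = integral {0..x} (\<lambda>s. fc c1 s - fc c2 s)" if "x \<in> {0..L}" for x
    unfolding Fc_def by (rule integral_diff[symmetric]) (use i that in auto)
  have "\<bar>integral {0..b} (\<lambda>s. fc c1 s - fc c2 s) - integral {0..a} (\<lambda>s. fc c1 s - fc c2 s)\<bar>
        \<le> sqrt \<bar>c1 - c2\<bar> * \<bar>b - a\<bar>"
  proof (rule int_bound[OF _ _ a b])
    show "continuous_on {0..L} (\<lambda>s. fc c1 s - fc c2 s)" by (intro continuous_intros cont_fc)
    show "\<bar>fc c1 s - fc c2 s\<bar> \<le> sqrt \<bar>c1 - c2\<bar>" for s unfolding fc_def by (rule sqrt_diff_bound)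
  qed
  also have "\<dots> \<le> sqrt \<bar>c1 - c2\<bar> * L" using a b by (intro mult_left_mono) auto
  finally show ?thesis using e[OF a] e[OF b] by (simp add: mult.commute)
qed

lemma d_eq:
  assumes x: "x \<in> {0..L}"
  shows "d_A V L E x = Inf ((\<lambda>y. \<bar>Fc (max E (V x0)) x - Fc (max E (V x0)) y\<bar>) `
            {x_minus V x0 (max E (V x0)) .. x_plus V L x0 (max E (V x0))})"
proof -
  let ?c = "max E (V x0)"
  have c: "V x0 \<le> ?c" by simp
  have sub: "{x_minus V x0 ?c .. x_plus V L x0 ?c} \<subseteq> {0..L}" using xm_prop[OF c] xp_prop[OF c] by auto
  have "oint (\<lambda>s. sqrt (max (V s - ?c) 0)) y x = Fc ?c x - Fc ?c y"
    if "y \<in> {x_minus V x0 ?c .. x_plus V L x0 ?c}" for y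
    using oint_eq[OF cont_fc[of ?c], of y x] x sub that unfolding Fc_def fc_def by auto
  thus ?thesis unfolding d_A_def Let_def E0_eq K_eq[OF c] by (intro arg_cong[where f=Inf] image_cong) auto
qed

end

lemma small_mult:
  fixes B t e :: real
  assumes "0 \<le> B" "0 \<le> t" "t < e / (4 * (B + 1))"
  shows "B * t < e / 4"
proof -
  have "(B + 1) * t < (B + 1) * (e / (4 * (B + 1)))" using assms by (intro mult_strict_left_mono) auto
  also have "\<dots> = e / 4" using assms(1) by (simp add: field_simps)
  finally show ?thesis using assms by (simp add: algebra_simps)
qed

lemma clamp_dist:
  fixes a1 b1 a2 b2 y :: real
  assumes "a1 \<le> b1" "a2 \<le> y" "y \<le> b2"
  shows "\<bar>y - max a1 (min b1 y)\<bar> \<le> \<bar>a1 - a2\<bar> + \<bar>b1 - b2\<bar>"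
  using assms by linarith

context setting begin

lemma d_lip:
  assumes x: "x \<in> {0..L}" and x': "x' \<in> {0..L}"
  shows "d_A V L E x \<le> d_A V L E x' + B * \<bar>x - x'\<bar>"
proof -
  let ?c = "max E (V x0)"
  have c: "V x0 \<le> ?c" by simp
  have ne: "{x_minus V x0 ?c .. x_plus V L x0 ?c} \<noteq> {}" using xm_prop[OF c] xp_prop[OF c] by auto
  show ?thesis unfolding d_eq[OF x] d_eq[OF x']
  proof (rule inf_compare[OF ne ne])
    fix y assume "y \<in> {x_minus V x0 ?c .. x_plus V L x0 ?c}"
    moreover have "\<bar>Fc ?c x - Fc ?c x'\<bar> \<le> B * \<bar>x - x'\<bar>" using Fc_lip[OF c x' x] by simp
    ultimately show "\<exists>y'\<in>{x_minus V x0 ?c .. x_plus V L x0 ?c}.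
        \<bar>Fc ?c x - Fc ?c y'\<bar> \<le> \<bar>Fc ?c x' - Fc ?c y\<bar> + B * \<bar>x - x'\<bar>"
    proof (intro bexI[of _ y])
      have "\<bar>Fc ?c x - Fc ?c y\<bar> \<le> \<bar>Fc ?c x - Fc ?c x'\<bar> + \<bar>Fc ?c x' - Fc ?c y\<bar>"
        using abs_triangle_ineq[of "Fc ?c x - Fc ?c x'" "Fc ?c x' - Fc ?c y"] by simp
      thus "\<bar>Fc ?c x - Fc ?c y\<bar> \<le> \<bar>Fc ?c x' - Fc ?c y\<bar> + B * \<bar>x - x'\<bar>"
        using \<open>\<bar>Fc ?c x - Fc ?c x'\<bar> \<le> B * \<bar>x - x'\<bar>\<close> by linarith
    qed simp
  qed auto
qed

lemma d_E:
  assumes x: "x \<in> {0..L}"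
  shows "d_A V L E1 x \<le> d_A V L E2 x + (L * sqrt \<bar>max E1 (V x0) - max E2 (V x0)\<bar> +
     B * (\<bar>x_minus V x0 (max E1 (V x0)) - x_minus V x0 (max E2 (V x0))\<bar> +
          \<bar>x_plus V L x0 (max E1 (V x0)) - x_plus V L x0 (max E2 (V x0))\<bar>))"
proof -
  let ?c1 = "max E1 (V x0)" and ?c2 = "max E2 (V x0)"
  let ?a1 = "x_minus V x0 ?c1" and ?a2 = "x_minus V x0 ?c2"
  let ?b1 = "x_plus V L x0 ?c1" and ?b2 = "x_plus V L x0 ?c2"
  have c1: "V x0 \<le> ?c1" and c2: "V x0 \<le> ?c2" by simp_all
  have a1: "0 \<le> ?a1" "?a1 \<le> x0" and b1: "x0 \<le> ?b1" "?b1 \<le> L" using xm_prop[OF c1] xp_prop[OF c1] by auto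
  have a2: "0 \<le> ?a2" "?a2 \<le> x0" and b2: "x0 \<le> ?b2" "?b2 \<le> L" using xm_prop[OF c2] xp_prop[OF c2] by auto
  have ne1: "{?a1..?b1} \<noteq> {}" and ne2: "{?a2..?b2} \<noteq> {}" using a1 b1 a2 b2 by auto
  show ?thesis unfolding d_eq[OF x]
  proof (rule inf_compare[OF ne1 ne2])
    fix y assume y: "y \<in> {?a2..?b2}"
    define y' where "y' = max ?a1 (min ?b1 y)"
    have y'S: "y' \<in> {?a1..?b1}" unfolding y'_def using a1 b1 by auto
    have dy: "\<bar>y - y'\<bar> \<le> \<bar>?a1 - ?a2\<bar> + \<bar>?b1 - ?b2\<bar>" unfolding y'_def using y a1 b1 by (intro clamp_dist) auto
    have yL: "y \<in> {0..L}" using y a2 b2 by auto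
    have y'L: "y' \<in> {0..L}" using y'S a1 b1 by auto
    have h1: "\<bar>Fc ?c1 y - Fc ?c1 y'\<bar> \<le> B * \<bar>y - y'\<bar>" using Fc_lip[OF c1 y'L yL] by simp
    have h2: "B * \<bar>y - y'\<bar> \<le> B * (\<bar>?a1 - ?a2\<bar> + \<bar>?b1 - ?b2\<bar>)" using dy B_nonneg by (rule mult_left_mono)
    have h3: "\<bar>(Fc ?c1 x - Fc ?c2 x) - (Fc ?c1 y - Fc ?c2 y)\<bar> \<le> L * sqrt \<bar>?c1 - ?c2\<bar>"
      by (rule Fc_diff[OF yL x])
    have "\<bar>Fc ?c1 x - Fc ?c1 y'\<bar> \<le> \<bar>Fc ?c2 x - Fc ?c2 y\<bar> + (L * sqrt \<bar>?c1 - ?c2\<bar> +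
        B * (\<bar>?a1 - ?a2\<bar> + \<bar>?b1 - ?b2\<bar>))"
    proof -
      have t1: "\<bar>Fc ?c1 x - Fc ?c1 y'\<bar> \<le> \<bar>Fc ?c1 x - Fc ?c1 y\<bar> + \<bar>Fc ?c1 y - Fc ?c1 y'\<bar>"
        using abs_triangle_ineq[of "Fc ?c1 x - Fc ?c1 y" "Fc ?c1 y - Fc ?c1 y'"] by simp
      have t2: "\<bar>Fc ?c1 x - Fc ?c1 y\<bar> \<le> \<bar>Fc ?c2 x - Fc ?c2 y\<bar> + \<bar>(Fc ?c1 x - Fc ?c2 x) - (Fc ?c1 y - Fc ?c2 y)\<bar>"
        using abs_triangle_ineq[of "Fc ?c2 x - Fc ?c2 y" "(Fc ?c1 x - Fc ?c2 x) - (Fc ?c1 y - Fc ?c2 y)"] by simp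
      show ?thesis using t1 t2 h1 h2 h3 by linarith
    qed
    thus "\<exists>y'\<in>{?a1..?b1}. \<bar>Fc ?c1 x - Fc ?c1 y'\<bar> \<le> \<bar>Fc ?c2 x - Fc ?c2 y\<bar> + (L * sqrt \<bar>?c1 - ?c2\<bar> +
        B * (\<bar>?a1 - ?a2\<bar> + \<bar>?b1 - ?b2\<bar>))" using y'S by blast
  qed auto
qed

end

lemma combine4:
  fixes a b c d P Q e :: real
  assumes "a \<le> b + P" "b \<le> c + Q" "c \<le> d + P" "d \<le> a + Q" "P + Q < e"
  shows "\<bar>a - c\<bar> < e"
  using assms unfolding abs_less_iff by linarith

context setting begin

lemma uc_d: "uniformly_continuous_on (UNIV \<times> {0..L}) (\<lambda>(E, x). d_A V L E x)"
  unfolding uniformly_continuous_on_def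
proof (intro allI impI)
  fix e :: real assume e: "e > 0"
  define e1 where "e1 = e / (4 * (B + 1))"
  have e1: "e1 > 0" using e B_nonneg by (simp add: e1_def)
  obtain d1 where d1: "d1 > 0" "\<forall>E\<in>{V x0..}. \<forall>E'\<in>{V x0..}. dist E' E < d1 \<longrightarrow>
      dist (x_minus V x0 E') (x_minus V x0 E) < e1"
    using uc_xm e1 unfolding uniformly_continuous_on_def by metis
  obtain d2 where d2: "d2 > 0" "\<forall>E\<in>{V x0..}. \<forall>E'\<in>{V x0..}. dist E' E < d2 \<longrightarrow>
      dist (x_plus V L x0 E') (x_plus V L x0 E) < e1"
    using uc_xp e1 unfolding uniformly_continuous_on_def by metis
  define s where "s = e / (4 * (L + 1))"
  have s: "s > 0" using e Lpos by (simp add: s_def)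
  define d where "d = min (min d1 d2) (min (s^2) e1)"
  show "\<exists>d>0. \<forall>p\<in>(UNIV::real set) \<times> {0..L}. \<forall>p'\<in>(UNIV::real set) \<times> {0..L}. dist p' p < d \<longrightarrow>
      dist ((\<lambda>(E, x). d_A V L E x) p') ((\<lambda>(E, x). d_A V L E x) p) < e"
  proof (intro exI[of _ d] conjI ballI impI)
    show "d > 0" using d1 d2 s e1 by (simp add: d_def)
    fix p p' assume p: "p \<in> (UNIV::real set) \<times> {0..L}" and p': "p' \<in> (UNIV::real set) \<times> {0..L}" and dp: "dist p' p < d"
    obtain E x where pe: "p = (E, x)" by (cases p)
    obtain E' x' where pe': "p' = (E', x')" by (cases p')
    have x: "x \<in> {0..L}" and x': "x' \<in> {0..L}" using p p' pe pe' by auto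
    have dE: "\<bar>E' - E\<bar> < d" using dist_fst_le[of p' p] dp pe pe' by (simp add: dist_real_def)
    have dx: "\<bar>x' - x\<bar> < d" using dist_snd_le[of p' p] dp pe pe' by (simp add: dist_real_def)
    let ?c = "max E (V x0)" and ?c' = "max E' (V x0)"
    have dc: "\<bar>?c' - ?c\<bar> < d" using dE by linarith
    have cc: "?c \<in> {V x0..}" "?c' \<in> {V x0..}" by auto
    have "dist ?c' ?c < d1" "dist ?c' ?c < d2" using dc unfolding d_def dist_real_def by linarith+
    hence "dist (x_minus V x0 ?c') (x_minus V x0 ?c) < e1" "dist (x_plus V L x0 ?c') (x_plus V L x0 ?c) < e1"
      using d1(2) d2(2) cc by blast+
    hence ha: "\<bar>x_minus V x0 ?c' - x_minus V x0 ?c\<bar> < e1"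
      and hb: "\<bar>x_plus V L x0 ?c' - x_plus V L x0 ?c\<bar> < e1" by (simp_all add: dist_real_def)
    have "sqrt \<bar>?c' - ?c\<bar> < sqrt (s^2)"
      by (rule real_sqrt_less_mono) (use dc in \<open>simp add: d_def\<close>)
    hence hs: "sqrt \<bar>?c' - ?c\<bar> < s" using s by simp
    have P1: "B * \<bar>x' - x\<bar> < e / 4"
      by (rule small_mult[OF B_nonneg]) (use dx in \<open>auto simp: d_def e1_def\<close>)
    have P2: "L * sqrt \<bar>?c' - ?c\<bar> < e / 4"
      by (rule small_mult) (use Lpos hs in \<open>auto simp: s_def\<close>)
    have P3: "B * \<bar>x_minus V x0 ?c' - x_minus V x0 ?c\<bar> < e / 4"
      by (rule small_mult[OF B_nonneg]) (use ha in \<open>auto simp: e1_def\<close>)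
    have P4: "B * \<bar>x_plus V L x0 ?c' - x_plus V L x0 ?c\<bar> < e / 4"
      by (rule small_mult[OF B_nonneg]) (use hb in \<open>auto simp: e1_def\<close>)
    have i1: "d_A V L E' x' \<le> d_A V L E' x + B * \<bar>x' - x\<bar>" by (rule d_lip[OF x' x])
    have i2: "d_A V L E' x \<le> d_A V L E x + (L * sqrt \<bar>?c' - ?c\<bar> +
     B * (\<bar>x_minus V x0 ?c' - x_minus V x0 ?c\<bar> + \<bar>x_plus V L x0 ?c' - x_plus V L x0 ?c\<bar>))"
      by (rule d_E[OF x])
    have i3: "d_A V L E x \<le> d_A V L E x' + B * \<bar>x' - x\<bar>" using d_lip[OF x x'] by (simp add: abs_minus_commute)
    have i4: "d_A V L E x' \<le> d_A V L E' x' + (L * sqrt \<bar>?c - ?c'\<bar> +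
     B * (\<bar>x_minus V x0 ?c - x_minus V x0 ?c'\<bar> + \<bar>x_plus V L x0 ?c - x_plus V L x0 ?c'\<bar>))"
      by (rule d_E[OF x'])
    have sw: "\<bar>x - x'\<bar> = \<bar>x' - x\<bar>" "\<bar>?c - ?c'\<bar> = \<bar>?c' - ?c\<bar>"
      "\<bar>x_minus V x0 ?c - x_minus V x0 ?c'\<bar> = \<bar>x_minus V x0 ?c' - x_minus V x0 ?c\<bar>"
      "\<bar>x_plus V L x0 ?c - x_plus V L x0 ?c'\<bar> = \<bar>x_plus V L x0 ?c' - x_plus V L x0 ?c\<bar>"
      by (simp_all add: abs_minus_commute)
    have "\<bar>d_A V L E' x' - d_A V L E x\<bar> < e"
    proof (rule combine4[OF i1 i2 i3])
      show "d_A V L E x' \<le> d_A V L E' x' + (L * sqrt \<bar>?c' - ?c\<bar> +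
         B * (\<bar>x_minus V x0 ?c' - x_minus V x0 ?c\<bar> + \<bar>x_plus V L x0 ?c' - x_plus V L x0 ?c\<bar>))"
        using i4 unfolding sw .
      show "B * \<bar>x' - x\<bar> + (L * sqrt \<bar>?c' - ?c\<bar> +
         B * (\<bar>x_minus V x0 ?c' - x_minus V x0 ?c\<bar> + \<bar>x_plus V L x0 ?c' - x_plus V L x0 ?c\<bar>)) < e"
        unfolding distrib_left using P1 P2 P3 P4 by linarith
    qed
    thus "dist ((\<lambda>(E, x). d_A V L E x) p') ((\<lambda>(E, x). d_A V L E x) p) < e"
      using pe pe' by (simp add: dist_real_def)
  qed
qed

lemma lip_d: "(B + 1)-lipschitz_on {0..L} (d_A V L E)"
  unfolding lipschitz_on_def
proof (intro conjI ballI)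
  show "0 \<le> B + 1" using B_nonneg by simp
  fix x y assume x: "x \<in> {0..L}" and y: "y \<in> {0..L}"
  have "\<bar>d_A V L E x - d_A V L E y\<bar> \<le> B * \<bar>x - y\<bar>"
    using d_lip[OF x y, of E] d_lip[OF y x, of E] by (simp add: abs_minus_commute)
  also have "\<dots> \<le> (B + 1) * \<bar>x - y\<bar>" by (simp add: mult_right_mono)
  finally show "dist (d_A V L E x) (d_A V L E y) \<le> (B + 1) * dist x y" by (simp add: dist_real_def)
qed

lemma main:
  shows "x_minus V x0 ` {E0 V L..} \<subseteq> {0..L} \<and>
         x_plus V L x0 ` {E0 V L..} \<subseteq> {0..L} \<and>
         uniformly_continuous_on {E0 V L..} (x_minus V x0) \<and>
         uniformly_continuous_on {E0 V L..} (x_plus V L x0) \<and>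
         uniformly_continuous_on (UNIV \<times> {0..L}) (\<lambda>(E, x). d_A V L E x) \<and>
         (\<exists>C>0. \<forall>E. C-lipschitz_on {0..L} (d_A V L E))"
proof (intro conjI)
  show "x_minus V x0 ` {E0 V L..} \<subseteq> {0..L}" unfolding E0_eq using xm_prop x0L by fastforce
  show "x_plus V L x0 ` {E0 V L..} \<subseteq> {0..L}" unfolding E0_eq using xp_prop x0pos by fastforce
  show "uniformly_continuous_on {E0 V L..} (x_minus V x0)" unfolding E0_eq by (rule uc_xm)
  show "uniformly_continuous_on {E0 V L..} (x_plus V L x0)" unfolding E0_eq by (rule uc_xp)
  show "uniformly_continuous_on (UNIV \<times> {0..L}) (\<lambda>(E, x). d_A V L E x)" by (rule uc_d)
  show "\<exists>C>0. \<forall>E. C-lipschitz_on {0..L} (d_A V L E)"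
    using lip_d B_nonneg by (intro exI[of _ "B + 1"]) auto
qed

end

theorem lemma2p1:
  fixes V :: "real \<Rightarrow> real" and L x0 :: real
  assumes "L > 0"
    and "continuous_on {0..L} V"
    and "0 < x0" and "x0 < L"
    and "\<And>a b. 0 \<le> a \<Longrightarrow> a < b \<Longrightarrow> b \<le> x0 \<Longrightarrow> V b < V a"
    and "\<And>a b. x0 \<le> a \<Longrightarrow> a < b \<Longrightarrow> b \<le> L \<Longrightarrow> V a < V b"
  shows "x_minus V x0 ` {E0 V L..} \<subseteq> {0..L} \<and>
         x_plus V L x0 ` {E0 V L..} \<subseteq> {0..L} \<and>
         uniformly_continuous_on {E0 V L..} (x_minus V x0) \<and>
         uniformly_continuous_on {E0 V L..} (x_plus V L x0) \<and>
         uniformly_continuous_on (UNIV \<times> {0..L}) (\<lambda>(E, x). d_A V L E x) \<and>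
         (\<exists>C>0. \<forall>E. C-lipschitz_on {0..L} (d_A V L E))"
proof -
  interpret setting V L x0 using assms by unfold_locales auto
  show ?thesis by (rule main)
qed

end
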